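(* Let $n,m\ge 1$ and $N\ge 2$ be integers, let $h:\mathbb{R}^n\to\mathbb{R}^m$ be a function, let $R\in\mathbb{R}^{m\times m}$ be symmetric positive definite, and let $\bm{z}\in\mathbb{R}^m$. Let $\bm{x}_1^f,\dots,\bm{x}_N^f\in\mathbb{R}^n$ be a forecast ensemble with mean $\bar{\bm{x}}^f=\frac1N\sum_i\bm{x}_i^f$ and anomaly matrix $A^f=[\bm{x}_1^f-\bar{\bm{x}}^f,\dots,\bm{x}_N^f-\bar{\bm{x}}^f]\in\mathbb{R}^{n\times N}$, and set $P^f=\frac{1}{N-1}A^f(A^f)^\top$. Let $\bm{z}_i^f=h(\bm{x}_i^f)$, $\bar{\bm{z}}^f=\frac1N\sum_i\bm{z}_i^f$, $\mathcal{Z}^f=[\bm{z}_1^f-\bar{\bm{z}}^f,\dots,\bm{z}_N^f-\bar{\bm{z}}^f]$, $B^f=\bigl(\mathcal{Z}^f(\mathcal{Z}^f)^\top+(N-1)R\bigr)^{-1}$, $K=\frac{1}{N-1}A^f(\mathcal{Z}^f)^\top\bigl(\frac{1}{N-1}\mathcal{Z}^f(\mathcal{Z}^f)^\top+R\bigr)^{-1}$ (so $K=A^f(\mathcal{Z}^f)^\top B^f$), and $\bar{\bm{x}}^a=\bar{\bm{x}}^f+K(\bm{z}-\bar{\bm{z}}^f)$. Define $\bm{x}_i^{rc}=\bar{\bm{x}}^a+(\bm{x}_i^f-\bar{\bm{x}}^f)$, $\bm{z}_i^{rc}=h(\bm{x}_i^{rc})$, $\bar{\bm{z}}^{rc}=\frac1N\sum_i\bm{z}_i^{rc}$,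 $\mathcal{Z}^{rc}=[\bm{z}_1^{rc}-\bar{\bm{z}}^{rc},\dots,\bm{z}_N^{rc}-\bar{\bm{z}}^{rc}]$, $P_{xz}^{rc}=\frac{1}{N-1}A^f(\mathcal{Z}^{rc})^\top$, $S^{rc}=\frac{1}{N-1}\mathcal{Z}^{rc}(\mathcal{Z}^{rc})^\top+R$, $\Gamma^{rc}=\mathcal{Z}^{rc}(\mathcal{Z}^{rc})^\top+(N-1)R$, and $$P^{a,rc}=P^f+KS^{rc}K^\top-K(P_{xz}^{rc})^\top-P_{xz}^{rc}K^\top .$$ Let $T^{rc}\in\mathbb{R}^{N\times N}$ be the symmetric positive semidefinite square root $$T^{rc}=\Bigl(I-(\mathcal{Z}^f)^\top B^f\mathcal{Z}^{rc}-(\mathcal{Z}^{rc})^\top B^f\mathcal{Z}^f+(\mathcal{Z}^f)^\top B^f\Gamma^{rc}B^f\mathcal{Z}^f\Bigr)^{1/2}$$ (the matrix inside is positive semidefinite), and let $\widetilde{A}^a=A^fT^{rc}$. Assume the update is accepted, i.e. $\operatorname{tr}(P^{a,rc})\le\operatorname{tr}(P^f)$. Then $$\frac{1}{N-1}\widetilde{A}^a(\widetilde{A}^a)^\top=P^{a,rc}.$$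
   Context: This is the "recalibrated ensemble transform Kalman filter" analysis step for a measurement model $\bm{z}=h(\bm{x})+\bm{v}$, $\bm{v}\sim\mathcal{N}(\bm{0},R)$; the candidate analysis ensemble is $\bar{\bm{x}}^a\bm{1}^\top+\widetilde{A}^a$. *)

theory Defs
  imports "HOL-Analysis.Analysis"
begin

text \<open>Matrices are rendered as real^'cols^'rows (HOL-Analysis), ensemble members
are indexed by a finite type 'N with CARD('N) = N.\<close>

definition ens_mean :: "('N::finite \<Rightarrow> real^'d) \<Rightarrow> real^'d" where
  "ens_mean x = (1 / real CARD('N)) *\<^sub>R (\<Sum>i\<in>UNIV. x i)"

definition anomaly :: "('N::finite \<Rightarrow> real^'d) \<Rightarrow> real^'N^'d" where
  "anomaly x = (\<chi> r c. (x c - ens_mean x) $ r)"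

definition sym_mat :: "real^'k^'k \<Rightarrow> bool" where
  "sym_mat M \<longleftrightarrow> transpose M = M"

definition pos_def :: "real^'k^'k \<Rightarrow> bool" where
  "pos_def M \<longleftrightarrow> (\<forall>v. v \<noteq> 0 \<longrightarrow> v \<bullet> (M *v v) > 0)"

definition pos_semidef :: "real^'k^'k \<Rightarrow> bool" where
  "pos_semidef M \<longleftrightarrow> (\<forall>v. v \<bullet> (M *v v) \<ge> 0)"

end

theory Submission
  imports Defs
begin

lemma mdiff_l: "(A::real^'n^'m) ** (B - C) = A ** B - A ** C"
  by (simp add: matrix_matrix_mult_def vec_eq_iff algebra_simps sum_subtractf)
lemma madd_r: "((A::real^'n^'m) + B) ** C = A ** C + B ** C"
  by (simp add: matrix_matrix_mult_def vec_eq_iff algebra_simps sum.distrib)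
lemma mdiff_r: "((A::real^'n^'m) - B) ** C = A ** C - B ** C"
  by (simp add: matrix_matrix_mult_def vec_eq_iff algebra_simps sum_subtractf)
lemma tr_add: "transpose ((A::real^'n^'m) + B) = transpose A + transpose B"
  by (simp add: transpose_def vec_eq_iff)

lemma matrix_inv_props:
  fixes A :: "real^'n^'n"
  assumes "invertible A"
  shows "A ** matrix_inv A = mat 1" "matrix_inv A ** A = mat 1"
proof -
  have "\<exists>A'. A ** A' = mat 1 \<and> A' ** A = mat 1" using assms unfolding invertible_def by blast
  from someI_ex[OF this] show "A ** matrix_inv A = mat 1" "matrix_inv A ** A = mat 1"
    unfolding matrix_inv_def by auto
qed

lemma inv_unique:
  fixes A X Y :: "real^'n^'n"
  assumes "A ** X = mat 1" "Y ** A = mat 1"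
  shows "X = Y"
  by (metis assms matrix_mul_assoc matrix_mul_lid matrix_mul_rid)

lemma quad_AAt: "(v::real^'m) \<bullet> ((Z ** transpose Z) *v v) = (transpose Z *v v) \<bullet> (transpose Z *v v)"
proof -
  have "v \<bullet> ((Z ** transpose Z) *v v) = v \<bullet> (Z *v (transpose Z *v v))"
    by (metis matrix_vector_mul_assoc)
  also have "\<dots> = (v v* Z) \<bullet> (transpose Z *v v)" by (simp add: dot_lmul_matrix)
  also have "v v* Z = transpose Z *v v"
    by (metis transpose_transpose vector_transpose_matrix)
  finally show ?thesis .
qed

lemma pd_invertible:
  fixes Z :: "real^'N^'m" and R :: "real^'m^'m"
  assumes "pos_def R" "c > 0"
  shows "invertible (Z ** transpose Z + c *\<^sub>R R)"
proof -
  let ?M = "Z ** transpose Z + c *\<^sub>R R"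
  have "\<forall>x. ?M *v x = 0 \<longrightarrow> x = 0"
  proof (intro allI impI)
    fix x assume h: "?M *v x = 0"
    show "x = 0"
    proof (rule ccontr)
      assume "x \<noteq> 0"
      then have "x \<bullet> (R *v x) > 0" using assms(1) unfolding pos_def_def by blast
      moreover have "x \<bullet> (?M *v x) = (transpose Z *v x) \<bullet> (transpose Z *v x) + c * (x \<bullet> (R *v x))"
        by (simp add: matrix_vector_mult_add_rdistrib quad_AAt inner_add_right
              scaleR_matrix_vector_assoc[symmetric])
      ultimately have "x \<bullet> (?M *v x) > 0" using assms(2)
        by (smt (verit) inner_ge_zero mult_pos_pos)
      with h show False by simp
    qed
  qed
  then show ?thesis using matrix_left_invertible_ker invertible_left_inverse by blast
qed

theorem proposition2:
  fixes h :: "real^'n::finite \<Rightarrow> real^'m::finite"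
    and R :: "real^'m^'m"
    and z :: "real^'m"
    and xf :: "'N::finite \<Rightarrow> real^'n"
    and T :: "real^'N^'N"
  assumes N2: "CARD('N) \<ge> 2"
    and R_sym: "sym_mat R" and R_pd: "pos_def R"
  defines "xbf \<equiv> ens_mean xf"
  defines "Af \<equiv> anomaly xf"
  defines "Pf \<equiv> (1 / (real CARD('N) - 1)) *\<^sub>R (Af ** transpose Af)"
  defines "zbf \<equiv> ens_mean (\<lambda>i. h (xf i))"
  defines "Zf \<equiv> anomaly (\<lambda>i. h (xf i))"
  defines "Bf \<equiv> matrix_inv (Zf ** transpose Zf + (real CARD('N) - 1) *\<^sub>R R)"
  defines "K \<equiv> (1 / (real CARD('N) - 1)) *\<^sub>R (Af ** transpose Zf) **
               matrix_inv ((1 / (real CARD('N) - 1)) *\<^sub>R (Zf ** transpose Zf) + R)"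
  defines "xba \<equiv> xbf + K *v (z - zbf)"
  defines "xrc \<equiv> (\<lambda>i. xba + (xf i - xbf))"
  defines "Zrc \<equiv> anomaly (\<lambda>i. h (xrc i))"
  defines "Pxz \<equiv> (1 / (real CARD('N) - 1)) *\<^sub>R (Af ** transpose Zrc)"
  defines "Src \<equiv> (1 / (real CARD('N) - 1)) *\<^sub>R (Zrc ** transpose Zrc) + R"
  defines "Grc \<equiv> Zrc ** transpose Zrc + (real CARD('N) - 1) *\<^sub>R R"
  defines "Parc \<equiv> Pf + K ** Src ** transpose K - K ** transpose Pxz - Pxz ** transpose K"
  assumes T_sym: "sym_mat T" and T_psd: "pos_semidef T"
    and T_sq: "T ** T = mat 1 - transpose Zf ** Bf ** Zrc - transpose Zrc ** Bf ** Zf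
                        + transpose Zf ** Bf ** Grc ** Bf ** Zf"
    and accepted: "trace Parc \<le> trace Pf"
  shows "(1 / (real CARD('N) - 1)) *\<^sub>R ((Af ** T) ** transpose (Af ** T)) = Parc"
proof -
  define c where "c = real CARD('N) - 1"
  have c0: "c > 0" using N2 unfolding c_def by simp
  define M where "M = Zf ** transpose Zf + c *\<^sub>R R"
  have Minv: "invertible M" unfolding M_def using pd_invertible[OF R_pd c0] .
  have Bf_M: "Bf = matrix_inv M" unfolding Bf_def M_def c_def ..
  have MB: "M ** Bf = mat 1" and BM: "Bf ** M = mat 1"
    using matrix_inv_props[OF Minv] Bf_M by auto
  have Mt: "transpose M = M"
    using R_sym unfolding M_def sym_mat_def
    by (simp add: tr_add transpose_scalar matrix_transpose_mul)
  have Bt: "transpose Bf = Bf"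
  proof -
    have "transpose Bf ** M = mat 1"
      using MB by (metis Mt matrix_transpose_mul transpose_mat)
    then show ?thesis by (rule sym[OF inv_unique[OF MB]])
  qed
  define M' where "M' = (1 / c) *\<^sub>R (Zf ** transpose Zf) + R"
  have M'M: "M' = (1/c) *\<^sub>R M" using c0 unfolding M'_def M_def
    by (simp add: scaleR_add_right)
  have M'inv: "invertible M'" unfolding M'M using c0 by (intro scalar_invertible[OF _ Minv]) simp
  have "M' ** (c *\<^sub>R Bf) = mat 1"
    unfolding M'M using c0 by (simp add: matrix_scalar_ac scalar_matrix_assoc[symmetric] MB)
  then have invM': "matrix_inv M' = c *\<^sub>R Bf"
    by (rule sym[OF inv_unique[OF _ matrix_inv_props(2)[OF M'inv]]])
  have "K = (1/c) *\<^sub>R (Af ** transpose Zf) ** matrix_inv M'"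
    unfolding K_def M'_def c_def by (rule refl)
  also have "\<dots> = Af ** transpose Zf ** Bf" using c0
    by (simp add: invM' matrix_scalar_ac)
  finally have Kd: "K = Af ** transpose Zf ** Bf" .
  have KT: "transpose K = Bf ** Zf ** transpose Af"
    unfolding Kd by (simp add: matrix_transpose_mul Bt matrix_mul_assoc)
  have Tt: "transpose T = T" using T_sym unfolding sym_mat_def .
  have "(Af ** T) ** transpose (Af ** T) = Af ** (T ** T) ** transpose Af"
    by (simp add: matrix_transpose_mul Tt matrix_mul_assoc)
  also have "\<dots> = Af ** transpose Af - K ** Zrc ** transpose Af - Af ** transpose Zrc ** transpose K
      + K ** Grc ** transpose K"
    unfolding T_sq KT Kd
    by (simp add: mdiff_l mdiff_r madd_r matrix_add_ldistrib matrix_mul_assoc KT[unfolded Kd])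
  finally have L: "(Af ** T) ** transpose (Af ** T) = \<dots>" .
  have G: "Grc = c *\<^sub>R Src" unfolding Grc_def Src_def c_def using c0 unfolding c_def
    by (simp add: scaleR_add_right)
  have e1: "(1/c) *\<^sub>R (K ** Grc ** transpose K) = K ** Src ** transpose K"
    unfolding G using c0 by (simp add: matrix_scalar_ac scalar_matrix_assoc[symmetric])
  have e2: "(1/c) *\<^sub>R (K ** Zrc ** transpose Af) = K ** transpose Pxz"
    unfolding Pxz_def c_def[symmetric]
    by (simp add: transpose_scalar matrix_transpose_mul matrix_scalar_ac scalar_matrix_assoc[symmetric] matrix_mul_assoc)
  have e3: "(1/c) *\<^sub>R (Af ** transpose Zrc ** transpose K) = Pxz ** transpose K"
    unfolding Pxz_def c_def[symmetric]
    by (simp add: scalar_matrix_assoc)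
  show ?thesis
    unfolding L Parc_def Pf_def c_def[symmetric]
    by (simp add: scaleR_diff_right scaleR_add_right e1 e2 e3)
qed

end
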